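(* Let $n,m\ge 1$, let $\mathbf y\in\{0,1\}^n$ be fixed training labels, let $\Psi\in\mathbb R^{m\times n}$ be a feature matrix, and let $\mathrm{metric}$ be of the form $$\mathrm{metric}(\hat{\mathbf y},\check{\mathbf y})=\sum_{j=1}^{J}\frac{a_j\,\mathrm{TP}+b_j\,\mathrm{TN}+f_j(\mathrm{PP},\mathrm{AP})}{g_j(\mathrm{PP},\mathrm{AP})}.$$ Then $$\max_{\theta\in\mathbb R^m}\ \min_{\mathcal Q}\ \max_{\mathcal P}\ \mathbb E_{\hat{\mathbf Y}\sim\mathcal P,\check{\mathbf Y}\sim\mathcal Q}\Big[\mathrm{metric}(\hat{\mathbf Y},\check{\mathbf Y})-\theta^\top\big(\Psi\check{\mathbf Y}-\Psi\mathbf y\big)\Big]$$ (where $\mathcal P,\mathcal Q$ range over all probability distributions on $\{0,1\}^n$ and $\hat{\mathbf Y},\check{\mathbf Y}$ are independent) is equal to $$\max_{\theta\in\mathbb R^m}\Big\{\min_{\mathbf Q\in\Delta}\max_{\mathbf P\in\Delta}\Big[\sum_{k=0}^n\sum_{l=0}^n\sum_{j=1}^J\frac{1}{g_j(k,l)}\Big\{a_j[\mathbf p_k^1\cdot\mathbf q_l^1]+b_j[\mathbf p_k^0\cdot\mathbf q_l^0]+f_j(k,l)r_ks_l\Big\}-\langle\mathbf Q^\top\mathbf 1,\Psi^\top\theta\rangle\Big]+\langle\mathbf y,\Psi^\top\theta\rangle\Big\}.$$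
   Context: For $\hat{\mathbf y},\check{\mathbf y}\in\{0,1\}^n$: $\mathrm{TP}=\sum_i\hat y_i\check y_i$, $\mathrm{TN}=\sum_i(1-\hat y_i)(1-\check y_i)$, $\mathrm{PP}=\sum_i\hat y_i$, $\mathrm{AP}=\sum_i\check y_i$; $a_j,b_j\in\mathbb R$ and $f_j,g_j:\{0,\dots,n\}^2\to\mathbb R$ with $g_j$ never zero. Features: the feature of the whole label vector is $\phi(\mathbf x,\mathbf y)=\sum_i\phi(x_i,y_i)$ with $\phi(x_i,0)=0$, and the $i$-th column of $\Psi$ is $\phi(x_i,1)\in\mathbb R^m$, so $\phi(\mathbf x,\mathbf y)=\Psi\mathbf y$. The set $\Delta\subset\mathbb R^{n\times n}$ (entries $p_{i,k}$, $i,k\in\{1,\dots,n\}$) is $$\Delta=\Big\{\mathbf P:\ p_{i,k}\ge 0\ \forall i,k;\ \ p_{i,k}\le\tfrac1k\textstyle\sum_{j}p_{j,k}\ \forall i,k;\ \ \sum_k\tfrac1k\sum_ip_{i,k}\le 1\Big\}.$$ From $\mathbf P\in\Delta$ one defines: $\mathbf p_k^1=\mathbf P_{(:,k)}$ for $k\ge1$ and $\mathbf p_0^1=\mathbf 0$; $r_k=\frac1k\mathbf 1^\top\mathbf p_k^1$ for $k\ge1$ and $r_0=1-\sum_{k=1}^n r_k$; $\mathbf p_k^0=r_k\mathbf 1-\mathbf p_k^1$ for $k\in\{0,\dots,n\}$. The quantities $\mathbf q_l^1,\mathbf q_l^0,s_l$ are defined from $\mathbf Q$ in the same way. (These represent $(\mathbf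 p_k^a)_i=\mathcal P(\hat Y_i=a,\sum\hat Y=k)$ and $r_k=\mathcal P(\sum\hat Y=k)$.) *)

theory Defs
  imports "HOL-Analysis.Analysis"
begin

text \<open>Label vectors in {0,1}^n, with n = CARD('n) items indexed by the finite type 'n.\<close>
definition labels :: "(real^'n) set" where
  "labels = {v. \<forall>i. v $ i \<in> {0, 1}}"

text \<open>Confusion-matrix counts (as natural numbers, so that f_j, g_j take arguments in {0..n}).\<close>
definition TP :: "real^'n \<Rightarrow> real^'n \<Rightarrow> nat" where
  "TP yh yc = card {i. yh $ i = 1 \<and> yc $ i = 1}"
definition TN :: "real^'n \<Rightarrow> real^'n \<Rightarrow> nat" where
  "TN yh yc = card {i. yh $ i = 0 \<and> yc $ i = 0}"
definition PP :: "real^'n \<Rightarrow> nat" where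
  "PP yh = card {i. yh $ i = 1}"
definition AP :: "real^'n \<Rightarrow> nat" where
  "AP yc = card {i. yc $ i = 1}"

definition metric ::
  "nat \<Rightarrow> (nat \<Rightarrow> real) \<Rightarrow> (nat \<Rightarrow> real) \<Rightarrow> (nat \<Rightarrow> nat \<Rightarrow> nat \<Rightarrow> real)
   \<Rightarrow> (nat \<Rightarrow> nat \<Rightarrow> nat \<Rightarrow> real) \<Rightarrow> real^'n \<Rightarrow> real^'n \<Rightarrow> real" where
  "metric J a b f g yh yc =
     (\<Sum>j=1..J. (a j * real (TP yh yc) + b j * real (TN yh yc) + f j (PP yh) (AP yc))
                 / g j (PP yh) (AP yc))"

definition distribs :: "(real^'n \<Rightarrow> real) set" where
  "distribs = {P. (\<forall>v. 0 \<le> P v) \<and> (\<forall>v. v \<notin> labels \<longrightarrow> P v = 0)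
                 \<and> (\<Sum>v\<in>labels. P v) = 1}"

definition expect2 :: "(real^'n \<Rightarrow> real) \<Rightarrow> (real^'n \<Rightarrow> real)
     \<Rightarrow> (real^'n \<Rightarrow> real^'n \<Rightarrow> real) \<Rightarrow> real" where
  "expect2 P Q h = (\<Sum>yh\<in>labels. \<Sum>yc\<in>labels. P yh * Q yc * h yh yc)"

text \<open>The set Delta of n x n matrices; entry p_{i,k} is P i k with i an item and
  k in {1..n}; entries with k outside {1..n} are fixed to 0.\<close>
definition Delta :: "('n::finite \<Rightarrow> nat \<Rightarrow> real) set" where
  "Delta = {P. (\<forall>i k. 0 \<le> P i k)
              \<and> (\<forall>i k. k \<notin> {1..CARD('n)} \<longrightarrow> P i k = 0)
              \<and> (\<forall>i k. k \<in> {1..CARD('n)} \<longrightarrow> P i k \<le> (1 / real k) * (\<Sum>j\<in>UNIV. P j k))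
              \<and> (\<Sum>k=1..CARD('n). (1 / real k) * (\<Sum>i\<in>UNIV. P i k)) \<le> 1}"

text \<open>p_k^1 (with p_0^1 = 0), r_k (with r_0 = 1 - sum r_k), and p_k^0 = r_k 1 - p_k^1.\<close>
definition p1 :: "('n::finite \<Rightarrow> nat \<Rightarrow> real) \<Rightarrow> nat \<Rightarrow> 'n \<Rightarrow> real" where
  "p1 P k i = (if k = 0 then 0 else P i k)"

definition rk :: "('n::finite \<Rightarrow> nat \<Rightarrow> real) \<Rightarrow> nat \<Rightarrow> real" where
  "rk P k = (if k = 0 then 1 - (\<Sum>k'=1..CARD('n). (1 / real k') * (\<Sum>i\<in>UNIV. P i k'))
             else (1 / real k) * (\<Sum>i\<in>UNIV. P i k))"

definition p0 :: "('n::finite \<Rightarrow> nat \<Rightarrow> real) \<Rightarrow> nat \<Rightarrow> 'n \<Rightarrow> real" where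
  "p0 P k i = rk P k - p1 P k i"

definition dotv :: "('n::finite \<Rightarrow> real) \<Rightarrow> ('n \<Rightarrow> real) \<Rightarrow> real" where
  "dotv u v = (\<Sum>i\<in>UNIV. u i * v i)"

definition marginal_payoff ::
  "nat \<Rightarrow> (nat \<Rightarrow> real) \<Rightarrow> (nat \<Rightarrow> real) \<Rightarrow> (nat \<Rightarrow> nat \<Rightarrow> nat \<Rightarrow> real)
   \<Rightarrow> (nat \<Rightarrow> nat \<Rightarrow> nat \<Rightarrow> real) \<Rightarrow> ('n::finite \<Rightarrow> nat \<Rightarrow> real) \<Rightarrow> ('n \<Rightarrow> nat \<Rightarrow> real) \<Rightarrow> real" where
  "marginal_payoff J a b f g P Q =
     (\<Sum>k=0..CARD('n). \<Sum>l=0..CARD('n). \<Sum>j=1..J.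
        (1 / g j k l) * (a j * dotv (p1 P k) (p1 Q l) + b j * dotv (p0 P k) (p0 Q l)
                         + f j k l * rk P k * rk Q l))"

definition colsum :: "('n::finite \<Rightarrow> nat \<Rightarrow> real) \<Rightarrow> real^'n" where
  "colsum Q = (\<chi> i. \<Sum>k=1..CARD('n). Q i k)"

end

theory Submission
  imports Defs
begin

definition ind :: "bool \<Rightarrow> real" where "ind c = (if c then 1 else 0)"

lemma finite_labels: "finite (labels :: (real^'n) set)"
proof -
  have "labels \<subseteq> (\<lambda>S::'n set. \<chi> i. if i \<in> S then (1::real) else 0) ` UNIV"
  proof
    fix v :: "real^'n" assume "v \<in> labels"
    then have "v = (\<chi> i. if i \<in> {i. v$i = 1} then 1 else 0)"
      by (auto simp: labels_def vec_eq_iff)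
    thus "v \<in> range (\<lambda>S::'n set. \<chi> i. if i \<in> S then (1::real) else 0)" by blast
  qed
  thus ?thesis by (rule finite_subset) simp
qed

lemma lab01: "v \<in> labels \<Longrightarrow> v $ i = 0 \<or> v $ i = 1"
  by (auto simp: labels_def)

lemma PP_le: "PP (v::real^'n) \<le> CARD('n)"
  unfolding PP_def by (rule card_mono) auto

lemma AP_PP: "AP = PP"
  by (rule ext) (simp add: AP_def PP_def)

lemma sum_lab_PP: assumes "v \<in> labels" shows "(\<Sum>i\<in>UNIV. v $ i) = real (PP v)"
proof -
  have "(\<Sum>i\<in>UNIV. v $ i) = (\<Sum>i\<in>UNIV. if v$i = 1 then 1 else 0)"
    by (rule sum.cong) (use lab01[OF assms] in auto)
  also have "\<dots> = real (card {i. v$i = 1})"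
    by (simp add: sum.If_cases)
  finally show ?thesis by (simp add: PP_def)
qed

lemma TP_sum: assumes "u \<in> labels" "v \<in> labels"
  shows "real (TP u v) = (\<Sum>i\<in>UNIV. u $ i * v $ i)"
proof -
  have "(\<Sum>i\<in>UNIV. u $ i * v $ i) = (\<Sum>i\<in>UNIV. if u$i = 1 \<and> v$i = 1 then 1 else 0)"
    by (rule sum.cong) (use lab01[OF assms(1)] lab01[OF assms(2)] in fastforce)+
  also have "\<dots> = real (card {i. u$i = 1 \<and> v$i = 1})"
    by (simp add: sum.If_cases)
  finally show ?thesis by (simp add: TP_def)
qed

lemma TN_sum: assumes "u \<in> labels" "v \<in> labels"
  shows "real (TN u v) = (\<Sum>i\<in>UNIV. (1 - u $ i) * (1 - v $ i))"
proof -
  have "(\<Sum>i\<in>UNIV. (1 - u $ i) * (1 - v $ i)) = (\<Sum>i\<in>UNIV. if u$i = 0 \<and> v$i = 0 then 1 else 0)"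
    by (rule sum.cong) (use lab01[OF assms(1)] lab01[OF assms(2)] in fastforce)+
  also have "\<dots> = real (card {i. u$i = 0 \<and> v$i = 0})"
    by (simp add: sum.If_cases)
  finally show ?thesis by (simp add: TN_def)
qed

lemma PP0: assumes "v \<in> labels" "PP v = 0" shows "v $ i = 0"
proof (rule ccontr)
  assume "v $ i \<noteq> 0"
  then have "v $ i = 1" using lab01[OF assms(1)] by auto
  then have "{i. v$i = 1} \<noteq> {}" by auto
  then show False using assms(2) by (simp add: PP_def)
qed

lemma ind_sum_k: "(\<Sum>k=0..CARD('n). ind (PP (v::real^'n) = k)) = 1"
  using PP_le[of v] by (simp add: ind_def sum.delta)


definition marg :: "(real^'n \<Rightarrow> real) \<Rightarrow> 'n \<Rightarrow> nat \<Rightarrow> real" where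
  "marg D i k = (\<Sum>v\<in>labels. D v * v$i * ind (PP v = k))"
definition Rk :: "(real^'n \<Rightarrow> real) \<Rightarrow> nat \<Rightarrow> real" where
  "Rk D k = (\<Sum>v\<in>labels. D v * ind (PP v = k))"

lemma lab_ge0: "v \<in> labels \<Longrightarrow> 0 \<le> v $ i" using lab01[of v i] by auto
lemma lab_le1: "v \<in> labels \<Longrightarrow> v $ i \<le> 1" using lab01[of v i] by auto

lemma sum_marg: "(\<Sum>i\<in>UNIV. marg D i k) = real k * Rk D k"
proof -
  have "(\<Sum>i\<in>UNIV. marg D i k) = (\<Sum>v\<in>labels. \<Sum>i\<in>UNIV. D v * v$i * ind (PP v = k))"
    unfolding marg_def by (rule sum.swap)
  also have "\<dots> = (\<Sum>v\<in>labels. D v * ind (PP v = k) * (\<Sum>i\<in>UNIV. v$i))"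
    by (rule sum.cong[OF refl]) (subst sum_distrib_left, simp add: mult_ac)
  also have "\<dots> = (\<Sum>v\<in>labels. real k * (D v * ind (PP v = k)))"
    by (rule sum.cong) (auto simp: sum_lab_PP ind_def)
  finally show ?thesis by (simp add: Rk_def sum_distrib_left)
qed

lemma distribs_ge0: "D \<in> distribs \<Longrightarrow> 0 \<le> D v" by (simp add: distribs_def)
lemma distribs_sum: "D \<in> distribs \<Longrightarrow> (\<Sum>v\<in>labels. D v) = 1" by (simp add: distribs_def)

lemma Rk_all: fixes D :: "real^'n \<Rightarrow> real" assumes "D \<in> distribs" shows "(\<Sum>k=0..CARD('n). Rk D k) = 1"
proof -
  have "(\<Sum>k=0..CARD('n). Rk D k) = (\<Sum>v\<in>(labels::(real^'n) set). D v * (\<Sum>k=0..CARD('n). ind (PP v = k)))"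
    unfolding Rk_def by (subst sum.swap) (simp add: sum_distrib_left)
  also have "\<dots> = 1" using assms by (simp add: ind_sum_k distribs_sum)
  finally show ?thesis .
qed

lemma Rk_split: fixes D :: "real^'n \<Rightarrow> real" assumes "D \<in> distribs" shows "(\<Sum>k=1..CARD('n). Rk D k) = 1 - Rk D 0"
  using Rk_all[OF assms] by (simp add: sum.atLeast_Suc_atMost)

lemma Rk_ge0: "D \<in> distribs \<Longrightarrow> 0 \<le> Rk D k"
  unfolding Rk_def by (intro sum_nonneg) (simp add: distribs_ge0 ind_def)

lemma rk_marg: fixes D :: "real^'n \<Rightarrow> real" assumes "D \<in> distribs" shows "rk (marg D) k = Rk D k"
proof (cases "k = 0")
  case True
  have "(\<Sum>k'=1..CARD('n). 1 / real k' * (\<Sum>i\<in>UNIV. marg D i k')) = (\<Sum>k'=1..CARD('n). Rk D k')"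
    by (rule sum.cong) (auto simp: sum_marg)
  then show ?thesis using True Rk_split[OF assms] by (simp add: rk_def)
next
  case False
  then show ?thesis by (simp add: rk_def sum_marg)
qed

lemma marg0: "marg D i 0 = 0"
  unfolding marg_def by (rule sum.neutral) (auto simp: ind_def PP0)

lemma p1_marg: "p1 (marg D) k i = marg D i k"
  by (simp add: p1_def marg0)

lemma p0_marg: assumes "D \<in> distribs"
  shows "p0 (marg D) k i = (\<Sum>v\<in>labels. D v * (1 - v$i) * ind (PP v = k))"
  by (simp add: p0_def p1_marg rk_marg[OF assms] Rk_def marg_def sum_subtractf[symmetric] algebra_simps)

lemma marg_Delta: fixes D :: "real^'n \<Rightarrow> real" assumes "D \<in> distribs" shows "marg D \<in> Delta"
proof -
  have nn: "0 \<le> marg D i k" for i k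
    unfolding marg_def using assms
    by (intro sum_nonneg) (simp add: distribs_ge0 ind_def lab_ge0)
  have out: "marg D i k = 0" if "k \<notin> {1..CARD('n)}" for i k
  proof (cases "k = 0")
    case True then show ?thesis by (simp add: marg0)
  next
    case False
    then have "k > CARD('n)" using that by auto
    have "PP v \<noteq> k" for v :: "real^'n" using PP_le[of v] \<open>k > CARD('n)\<close> by auto
    then show ?thesis unfolding marg_def
      by (intro sum.neutral) (auto simp: ind_def)
  qed
  have le: "marg D i k \<le> 1 / real k * (\<Sum>j\<in>UNIV. marg D j k)" if "k \<in> {1..CARD('n)}" for i k
  proof -
    have "marg D i k \<le> Rk D k"
      unfolding marg_def Rk_def using assms
      by (intro sum_mono) (auto simp: ind_def distribs_ge0 lab_le1 mult_left_le)
    then show ?thesis using that by (simp add: sum_marg)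
  qed
  have "(\<Sum>k=1..CARD('n). 1 / real k * (\<Sum>i\<in>UNIV. marg D i k)) = (\<Sum>k=1..CARD('n). Rk D k)"
    by (rule sum.cong) (auto simp: sum_marg)
  also have "\<dots> \<le> 1" using Rk_split[OF assms] Rk_ge0[OF assms, of 0] by simp
  finally show ?thesis using nn out le unfolding Delta_def by blast
qed


definition frac :: "('n \<Rightarrow> real) \<Rightarrow> 'n set" where
  "frac p = {i. 0 < p i \<and> p i < 1}"

lemma hyper_base:
  fixes p :: "'n::finite \<Rightarrow> real" and k :: nat
  assumes p01: "\<forall>i. p i = 0 \<or> p i = 1" and sp: "(\<Sum>i\<in>UNIV. p i) = real k"
  shows "\<exists>D::real^'n \<Rightarrow> real. (\<forall>v. 0 \<le> D v) \<and> (\<forall>v. D v \<noteq> 0 \<longrightarrow> v \<in> labels \<and> PP v = k)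
     \<and> (\<Sum>v\<in>labels. D v) = 1 \<and> (\<forall>i. (\<Sum>v\<in>labels. D v * v$i) = p i)"
proof -
  define w :: "real^'n" where "w = (\<chi> i. p i)"
  have wl: "w \<in> labels" using p01 by (auto simp: labels_def w_def)
  have "(\<Sum>i\<in>UNIV. p i) = real (PP w)"
    using sum_lab_PP[OF wl] by (simp add: w_def)
  then have PPw: "PP w = k" using sp by simp
  define D where "D = (\<lambda>v::real^'n. if v = w then (1::real) else 0)"
  have "(\<Sum>v\<in>labels. D v) = 1" using wl by (simp add: D_def sum.delta[OF finite_labels])
  moreover have "(\<Sum>v\<in>labels. D v * v$i) = p i" for i
  proof -
    have "(\<Sum>v\<in>labels. D v * v$i) = (\<Sum>v\<in>labels. if v = w then w $ i else 0)"
      by (rule sum.cong) (auto simp: D_def)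
    also have "\<dots> = w $ i" using wl by (simp add: sum.delta[OF finite_labels])
    also have "\<dots> = p i" by (simp add: w_def)
    finally show ?thesis .
  qed
  moreover have "\<forall>v. 0 \<le> D v" by (simp add: D_def)
  moreover have "\<forall>v. D v \<noteq> 0 \<longrightarrow> v \<in> labels \<and> PP v = k" using wl PPw by (simp add: D_def)
  ultimately show ?thesis by blast
qed

lemma second_frac:
  fixes p :: "'n::finite \<Rightarrow> real" and k :: nat
  assumes p01: "\<forall>i. 0 \<le> p i \<and> p i \<le> 1" and sp: "(\<Sum>i\<in>UNIV. p i) = real k"
    and a: "a \<in> frac p"
  shows "\<exists>b. b \<noteq> a \<and> b \<in> frac p"
proof (rule ccontr)
  assume nb: "\<not> (\<exists>b. b \<noteq> a \<and> b \<in> frac p)"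
  have int: "\<forall>i. i \<noteq> a \<longrightarrow> p i = 0 \<or> p i = 1"
  proof (intro allI impI)
    fix i assume "i \<noteq> a"
    then have "i \<notin> frac p" using nb by auto
    then show "p i = 0 \<or> p i = 1" using p01[rule_format, of i] by (auto simp: frac_def)
  qed
  have "(\<Sum>i\<in>UNIV. p i) = p a + (\<Sum>i\<in>UNIV - {a}. p i)"
    by (rule sum.remove) auto
  also have "(\<Sum>i\<in>UNIV - {a}. p i) = (\<Sum>i\<in>UNIV - {a}. if p i = 1 then 1 else 0)"
    by (rule sum.cong) (use int in auto)
  also have "\<dots> = real (card ((UNIV - {a}) \<inter> {i. p i = 1}))"
    by (simp add: sum.If_cases)
  finally have eq: "p a = real k - real (card ((UNIV - {a}) \<inter> {i. p i = 1}))" using sp by simp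
  show False
  proof (cases "card ((UNIV - {a}) \<inter> {i. p i = 1}) < k")
    case True
    then have "real (card ((UNIV - {a}) \<inter> {i. p i = 1})) + 1 \<le> real k" by linarith
    then show False using eq a by (simp add: frac_def)
  next
    case False
    then show False using eq a by (simp add: frac_def)
  qed
qed

lemma hyper_N:
  fixes k :: nat
  shows "\<And>p :: 'n::finite \<Rightarrow> real. card (frac p) = N \<Longrightarrow> \<forall>i. 0 \<le> p i \<and> p i \<le> 1 \<Longrightarrow> (\<Sum>i\<in>UNIV. p i) = real k \<Longrightarrow>
    \<exists>D::real^'n \<Rightarrow> real. (\<forall>v. 0 \<le> D v) \<and> (\<forall>v. D v \<noteq> 0 \<longrightarrow> v \<in> labels \<and> PP v = k)
     \<and> (\<Sum>v\<in>labels. D v) = 1 \<and> (\<forall>i. (\<Sum>v\<in>labels. D v * v$i) = p i)"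
proof (induction N rule: less_induct)
  case (less N p)
  show ?case
  proof (cases "frac p = {}")
    case True
    have "\<forall>i. p i = 0 \<or> p i = 1"
    proof
      fix i have "i \<notin> frac p" using True by auto
      then show "p i = 0 \<or> p i = 1" using less.prems(2)[rule_format, of i] by (auto simp: frac_def)
    qed
    then show ?thesis using hyper_base less.prems(3) by blast
  next
    case False
    then obtain a where a: "a \<in> frac p" by blast
    obtain b where b: "b \<noteq> a" "b \<in> frac p" using second_frac[OF less.prems(2,3) a] by blast
    define e1 where "e1 = min (1 - p a) (p b)"
    define e2 where "e2 = min (p a) (1 - p b)"
    have e1: "0 < e1" using a b by (simp add: frac_def e1_def)
    have e2: "0 < e2" using a b by (simp add: frac_def e2_def)
    define t where "t = (\<lambda>i. ind (i = a) - ind (i = b))"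
    have st: "(\<Sum>i\<in>UNIV. t i) = 0" by (simp add: t_def ind_def sum_subtractf)
    define p1 where "p1 = (\<lambda>i. p i + e1 * t i)"
    define p2 where "p2 = (\<lambda>i. p i - e2 * t i)"
    have ta: "t a = 1" and tb: "t b = -1" and to: "\<And>i. i \<noteq> a \<Longrightarrow> i \<noteq> b \<Longrightarrow> t i = 0"
      using b by (auto simp: t_def ind_def)
    have p1b: "\<forall>i. 0 \<le> p1 i \<and> p1 i \<le> 1"
    proof
      fix i show "0 \<le> p1 i \<and> p1 i \<le> 1"
        using less.prems(2) a b ta tb to[of i] e1 unfolding p1_def e1_def frac_def
        by (cases "i = a"; cases "i = b") auto
    qed
    have p2b: "\<forall>i. 0 \<le> p2 i \<and> p2 i \<le> 1"
    proof
      fix i show "0 \<le> p2 i \<and> p2 i \<le> 1"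
        using less.prems(2) a b ta tb to[of i] e2 unfolding p2_def e2_def frac_def
        by (cases "i = a"; cases "i = b") auto
    qed
    have s1: "(\<Sum>i\<in>UNIV. p1 i) = real k"
      using less.prems(3) st by (simp add: p1_def sum.distrib sum_distrib_left[symmetric])
    have s2: "(\<Sum>i\<in>UNIV. p2 i) = real k"
      using less.prems(3) st by (simp add: p2_def sum_subtractf sum_distrib_left[symmetric])
    have f1: "frac p1 \<subset> frac p"
    proof
      show "frac p1 \<subseteq> frac p"
      proof
        fix x assume "x \<in> frac p1"
        then show "x \<in> frac p" using a b to[of x] unfolding frac_def p1_def
          by (cases "x = a"; cases "x = b") auto
      qed
      have "a \<notin> frac p1 \<or> b \<notin> frac p1"
        using ta tb b unfolding frac_def p1_def e1_def by (auto simp: min_def)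
      then show "frac p1 \<noteq> frac p" using a b by auto
    qed
    have f2: "frac p2 \<subset> frac p"
    proof
      show "frac p2 \<subseteq> frac p"
      proof
        fix x assume "x \<in> frac p2"
        then show "x \<in> frac p" using a b to[of x] unfolding frac_def p2_def
          by (cases "x = a"; cases "x = b") auto
      qed
      have "a \<notin> frac p2 \<or> b \<notin> frac p2"
        using ta tb b unfolding frac_def p2_def e2_def by (auto simp: min_def)
      then show "frac p2 \<noteq> frac p" using a b by auto
    qed
    have c1: "card (frac p1) < N" using psubset_card_mono[OF _ f1] less.prems(1) by simp
    have c2: "card (frac p2) < N" using psubset_card_mono[OF _ f2] less.prems(1) by simp
    obtain D1 where D1: "\<forall>v. 0 \<le> D1 v" "\<forall>v. D1 v \<noteq> 0 \<longrightarrow> v \<in> labels \<and> PP v = k"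
      "(\<Sum>v\<in>labels. D1 v) = 1" "\<forall>i. (\<Sum>v\<in>labels. D1 v * v$i) = p1 i"
      using less.IH[OF c1 refl p1b s1] by blast
    obtain D2 where D2: "\<forall>v. 0 \<le> D2 v" "\<forall>v. D2 v \<noteq> 0 \<longrightarrow> v \<in> labels \<and> PP v = k"
      "(\<Sum>v\<in>labels. D2 v) = 1" "\<forall>i. (\<Sum>v\<in>labels. D2 v * v$i) = p2 i"
      using less.IH[OF c2 refl p2b s2] by blast
    define c1 where "c1 = e1 / (e1 + e2)"
    define c2 where "c2 = e2 / (e1 + e2)"
    have c12: "c1 + c2 = 1" using e1 e2 by (simp add: c1_def c2_def add_divide_distrib[symmetric])
    have c1p: "0 \<le> c1" "0 \<le> c2" using e1 e2 by (auto simp: c1_def c2_def)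
    have cc: "c2 * e1 = c1 * e2" by (simp add: c1_def c2_def)
    define D where "D = (\<lambda>v. c2 * D1 v + c1 * D2 v)"
    have "\<forall>v. 0 \<le> D v" using D1(1) D2(1) c1p by (simp add: D_def)
    moreover have "\<forall>v. D v \<noteq> 0 \<longrightarrow> v \<in> labels \<and> PP v = k"
    proof (intro allI impI)
      fix v assume "D v \<noteq> 0"
      then have "D1 v \<noteq> 0 \<or> D2 v \<noteq> 0" by (auto simp: D_def)
      then show "v \<in> labels \<and> PP v = k" using D1(2) D2(2) by blast
    qed
    moreover have "(\<Sum>v\<in>labels. D v) = 1"
      using D1(3) D2(3) c12 by (simp add: D_def sum.distrib sum_distrib_left[symmetric])
    moreover have "(\<Sum>v\<in>labels. D v * v$i) = p i" for i
    proof -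
      have "(\<Sum>v\<in>labels. D v * v$i) = c2 * (\<Sum>v\<in>labels. D1 v * v$i) + c1 * (\<Sum>v\<in>labels. D2 v * v$i)"
        by (simp add: D_def sum.distrib sum_distrib_left algebra_simps)
      also have "\<dots> = c2 * p1 i + c1 * p2 i" using D1(4) D2(4) by simp
      also have "\<dots> = (c1 + c2) * p i + (c2 * e1 - c1 * e2) * t i"
        by (simp add: p1_def p2_def algebra_simps)
      also have "\<dots> = p i" using c12 cc by simp
      finally show ?thesis .
    qed
    ultimately show ?thesis by blast
  qed
qed

lemma hyper:
  fixes p :: "'n::finite \<Rightarrow> real" and k :: nat
  assumes "\<forall>i. 0 \<le> p i \<and> p i \<le> 1" "(\<Sum>i\<in>UNIV. p i) = real k"
  shows "\<exists>D::real^'n \<Rightarrow> real. (\<forall>v. 0 \<le> D v) \<and> (\<forall>v. D v \<noteq> 0 \<longrightarrow> v \<in> labels \<and> PP v = k)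
     \<and> (\<Sum>v\<in>labels. D v) = 1 \<and> (\<forall>i. (\<Sum>v\<in>labels. D v * v$i) = p i)"
  using hyper_N[OF refl assms] .


lemma Delta_slice:
  fixes P :: "'n::finite \<Rightarrow> nat \<Rightarrow> real"
  assumes PD: "P \<in> Delta" and k: "k \<in> {1..CARD('n)}"
  shows "\<exists>D::real^'n \<Rightarrow> real. (\<forall>v. 0 \<le> D v) \<and> (\<forall>v. D v \<noteq> 0 \<longrightarrow> v \<in> labels \<and> PP v = k)
     \<and> (\<Sum>v\<in>labels. D v) = 1 \<and> (\<forall>i. rk P k * (\<Sum>v\<in>labels. D v * v$i) = P i k)"
proof -
  have nn: "\<And>i k. 0 \<le> P i k" and le: "\<And>i. P i k \<le> rk P k"
    using PD k by (auto simp: Delta_def rk_def)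
  have kpos: "k \<noteq> 0" using k by auto
  have sumP: "(\<Sum>i\<in>UNIV. P i k) = real k * rk P k" using kpos by (simp add: rk_def)
  show ?thesis
  proof (cases "rk P k = 0")
    case True
    then have P0: "P i k = 0" for i using nn[of i k] le[of i] by simp
    define p where "p = (\<lambda>i::'n. real k / real CARD('n))"
    have "\<forall>i. 0 \<le> p i \<and> p i \<le> 1" using k by (auto simp: p_def)
    moreover have "(\<Sum>i\<in>UNIV. p i) = real k" by (simp add: p_def)
    ultimately obtain D :: "real^'n \<Rightarrow> real" where "(\<forall>v. 0 \<le> D v) \<and> (\<forall>v. D v \<noteq> 0 \<longrightarrow> v \<in> labels \<and> PP v = k)
       \<and> (\<Sum>v\<in>labels. D v) = 1" using hyper by blast
    then show ?thesis using True P0 by auto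
  next
    case False
    have rpos: "0 < rk P k" using False sumP sum_nonneg[of UNIV "\<lambda>i. P i k"] nn kpos
      by (metis (no_types, lifting) le less_eq_real_def order_trans)
    define p where "p = (\<lambda>i. P i k / rk P k)"
    have "\<forall>i. 0 \<le> p i \<and> p i \<le> 1" using rpos nn le by (auto simp: p_def)
    moreover have "(\<Sum>i\<in>UNIV. p i) = real k" using rpos sumP by (simp add: p_def sum_divide_distrib[symmetric])
    ultimately obtain D :: "real^'n \<Rightarrow> real" where "(\<forall>v. 0 \<le> D v) \<and> (\<forall>v. D v \<noteq> 0 \<longrightarrow> v \<in> labels \<and> PP v = k)
       \<and> (\<Sum>v\<in>labels. D v) = 1 \<and> (\<forall>i. (\<Sum>v\<in>labels. D v * v$i) = p i)" using hyper by blast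
    then show ?thesis using rpos by (auto simp: p_def)
  qed
qed

lemma Delta_marg:
  fixes P :: "'n::finite \<Rightarrow> nat \<Rightarrow> real"
  assumes PD: "P \<in> Delta"
  shows "\<exists>D::real^'n \<Rightarrow> real. D \<in> distribs \<and> marg D = P"
proof -
  let ?K = "{1..CARD('n)}"
  have "\<forall>k\<in>?K. \<exists>D::real^'n \<Rightarrow> real. (\<forall>v. 0 \<le> D v) \<and> (\<forall>v. D v \<noteq> 0 \<longrightarrow> v \<in> labels \<and> PP v = k)
     \<and> (\<Sum>v\<in>labels. D v) = 1 \<and> (\<forall>i. rk P k * (\<Sum>v\<in>labels. D v * v$i) = P i k)"
    using Delta_slice[OF PD] by blast
  then obtain DD where DD: "\<And>k. k \<in> ?K \<Longrightarrow> (\<forall>v. 0 \<le> DD k v) \<and> (\<forall>v. DD k v \<noteq> 0 \<longrightarrow> v \<in> labels \<and> PP v = k)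
     \<and> (\<Sum>v\<in>labels. DD k v) = 1 \<and> (\<forall>i. rk P k * (\<Sum>v\<in>labels. DD k v * v$i) = P i k)"
    by metis
  have nn: "\<And>i k. 0 \<le> P i k" and out: "\<And>i k. k \<notin> ?K \<Longrightarrow> P i k = 0"
    and tot: "(\<Sum>k=1..CARD('n). (1 / real k) * (\<Sum>i\<in>UNIV. P i k)) \<le> 1"
    using PD by (auto simp: Delta_def)
  have rnn: "0 \<le> rk P k" if "k \<in> ?K" for k using that nn by (auto simp: rk_def intro!: divide_nonneg_nonneg sum_nonneg)
  define r0 where "r0 = 1 - (\<Sum>k\<in>?K. rk P k)"
  have r0: "0 \<le> r0"
  proof -
    have "(\<Sum>k\<in>?K. rk P k) = (\<Sum>k=1..CARD('n). (1 / real k) * (\<Sum>i\<in>UNIV. P i k))"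
      by (rule sum.cong) (auto simp: rk_def)
    then show ?thesis using tot by (simp add: r0_def)
  qed
  have z: "(0::real^'n) \<in> labels" by (simp add: labels_def)
  define D where "D = (\<lambda>v::real^'n. (\<Sum>k\<in>?K. rk P k * DD k v) + r0 * ind (v = 0))"
  have Dnn: "0 \<le> D v" for v
    unfolding D_def using DD rnn r0
    by (intro add_nonneg_nonneg sum_nonneg mult_nonneg_nonneg) (auto simp: ind_def)
  have Dout: "D v = 0" if "v \<notin> labels" for v
  proof -
    have "DD k v = 0" if "k \<in> ?K" for k using DD[OF that] \<open>v \<notin> labels\<close> by blast
    moreover have "v \<noteq> 0" using z that by auto
    ultimately show ?thesis by (simp add: D_def ind_def)
  qed
  have Dsum: "(\<Sum>v\<in>labels. D v) = 1"
  proof -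
    have "(\<Sum>v\<in>labels. D v) = (\<Sum>k\<in>?K. rk P k * (\<Sum>v\<in>labels. DD k v)) + r0 * (\<Sum>v\<in>(labels::(real^'n) set). ind (v = 0))"
      unfolding D_def by (simp add: sum.distrib sum_distrib_left sum.swap[of _ _ "labels"])
    also have "\<dots> = (\<Sum>k\<in>?K. rk P k) + r0"
      using DD z by (simp add: ind_def sum.delta[OF finite_labels])
    finally show ?thesis by (simp add: r0_def)
  qed
  have "marg D i k' = P i k'" for i k'
  proof -
    have "marg D i k' = (\<Sum>k\<in>?K. rk P k * (\<Sum>v\<in>labels. DD k v * v$i * ind (PP v = k')))
        + r0 * (\<Sum>v\<in>(labels::(real^'n) set). ind (v = 0) * v$i * ind (PP v = k'))"
      unfolding marg_def D_def
      by (simp add: sum.distrib sum_distrib_left sum_distrib_right sum.swap[of _ _ "labels"] algebra_simps)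
    also have "(\<Sum>v\<in>(labels::(real^'n) set). ind (v = 0) * v$i * ind (PP v = k')) = 0"
      by (rule sum.neutral) (auto simp: ind_def)
    also have "(\<Sum>k\<in>?K. rk P k * (\<Sum>v\<in>labels. DD k v * v$i * ind (PP v = k')))
        = (\<Sum>k\<in>?K. if k = k' then P i k else 0)"
    proof (rule sum.cong[OF refl])
      fix k assume kK: "k \<in> ?K"
      have "(\<Sum>v\<in>labels. DD k v * v$i * ind (PP v = k')) = (if k = k' then (\<Sum>v\<in>labels. DD k v * v$i) else 0)"
      proof (cases "k = k'")
        case True
        show ?thesis using True DD[OF kK] by (auto intro!: sum.cong simp: ind_def)
      next
        case False
        show ?thesis using False DD[OF kK] by (auto intro!: sum.neutral simp: ind_def)
      qed
      then show "rk P k * (\<Sum>v\<in>labels. DD k v * v$i * ind (PP v = k')) = (if k = k' then P i k else 0)"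
        using DD[OF kK] by auto
    qed
    also have "\<dots> = P i k'" using out[of k' i] by (simp add: sum.delta')
    finally show ?thesis by simp
  qed
  then have "marg D = P" by (intro ext)
  moreover have "D \<in> distribs" using Dnn Dout Dsum by (simp add: distribs_def)
  ultimately show ?thesis by blast
qed

lemma marg_image: "marg ` (distribs :: (real^'n \<Rightarrow> real) set) = Delta"
  using marg_Delta Delta_marg by blast


lemma bil:
  "(\<Sum>i\<in>I. (\<Sum>u\<in>U. P u * x u i) * (\<Sum>v\<in>V. Q v * z v i))
   = (\<Sum>u\<in>U. \<Sum>v\<in>V. P u * Q v * (\<Sum>i\<in>I. x u i * z v i :: real))"
proof -
  have "(\<Sum>i\<in>I. (\<Sum>u\<in>U. P u * x u i) * (\<Sum>v\<in>V. Q v * z v i))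
     = (\<Sum>i\<in>I. \<Sum>u\<in>U. \<Sum>v\<in>V. P u * Q v * (x u i * z v i))"
    by (simp add: sum_product mult_ac)
  also have "\<dots> = (\<Sum>u\<in>U. \<Sum>i\<in>I. \<Sum>v\<in>V. P u * Q v * (x u i * z v i))"
    by (rule sum.swap)
  also have "\<dots> = (\<Sum>u\<in>U. \<Sum>v\<in>V. \<Sum>i\<in>I. P u * Q v * (x u i * z v i))"
    by (rule sum.cong[OF refl], rule sum.swap)
  also have "\<dots> = (\<Sum>u\<in>U. \<Sum>v\<in>V. P u * Q v * (\<Sum>i\<in>I. x u i * z v i))"
    by (simp add: sum_distrib_left)
  finally show ?thesis .
qed

lemma swap3:
  "(\<Sum>a\<in>A. \<Sum>u\<in>U. \<Sum>v\<in>V. F a u v) = (\<Sum>u\<in>U. \<Sum>v\<in>V. \<Sum>a\<in>A. (F a u v :: real))"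
proof -
  have "(\<Sum>a\<in>A. \<Sum>u\<in>U. \<Sum>v\<in>V. F a u v) = (\<Sum>u\<in>U. \<Sum>a\<in>A. \<Sum>v\<in>V. F a u v)"
    by (rule sum.swap)
  also have "\<dots> = (\<Sum>u\<in>U. \<Sum>v\<in>V. \<Sum>a\<in>A. F a u v)"
    by (rule sum.cong[OF refl], rule sum.swap)
  finally show ?thesis .
qed

lemma swap5:
  "(\<Sum>k\<in>K. \<Sum>l\<in>L. \<Sum>j\<in>JJ. \<Sum>u\<in>U. \<Sum>v\<in>V. F k l j u v)
   = (\<Sum>u\<in>U. \<Sum>v\<in>V. \<Sum>k\<in>K. \<Sum>l\<in>L. \<Sum>j\<in>JJ. (F k l j u v :: real))"
proof -
  have "(\<Sum>k\<in>K. \<Sum>l\<in>L. \<Sum>j\<in>JJ. \<Sum>u\<in>U. \<Sum>v\<in>V. F k l j u v)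
      = (\<Sum>k\<in>K. \<Sum>l\<in>L. \<Sum>u\<in>U. \<Sum>v\<in>V. \<Sum>j\<in>JJ. F k l j u v)"
    by (rule sum.cong[OF refl], rule sum.cong[OF refl], rule swap3)
  also have "\<dots> = (\<Sum>k\<in>K. \<Sum>u\<in>U. \<Sum>v\<in>V. \<Sum>l\<in>L. \<Sum>j\<in>JJ. F k l j u v)"
    by (rule sum.cong[OF refl], rule swap3)
  also have "\<dots> = (\<Sum>u\<in>U. \<Sum>v\<in>V. \<Sum>k\<in>K. \<Sum>l\<in>L. \<Sum>j\<in>JJ. F k l j u v)"
    by (rule swap3)
  finally show ?thesis .
qed

lemma pair_ident:
  fixes u v :: "real^'n"
  assumes u: "u \<in> labels" and v: "v \<in> labels"
  shows "(\<Sum>k=0..CARD('n). \<Sum>l=0..CARD('n). \<Sum>j=1..J.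
     (1 / g j k l) * (a j * (\<Sum>i\<in>UNIV. (u$i * ind (PP u = k)) * (v$i * ind (PP v = l)))
       + b j * (\<Sum>i\<in>UNIV. ((1 - u$i) * ind (PP u = k)) * ((1 - v$i) * ind (PP v = l)))
       + f j k l * (ind (PP u = k) * ind (PP v = l))))
   = metric J a b f g u v"
proof -
  define G where "G = (\<lambda>k l. \<Sum>j=1..J. (1 / g j k l) * (a j * real (TP u v) + b j * real (TN u v) + f j k l))"
  have "(\<Sum>k=0..CARD('n). \<Sum>l=0..CARD('n). \<Sum>j=1..J.
     (1 / g j k l) * (a j * (\<Sum>i\<in>UNIV. (u$i * ind (PP u = k)) * (v$i * ind (PP v = l)))
       + b j * (\<Sum>i\<in>UNIV. ((1 - u$i) * ind (PP u = k)) * ((1 - v$i) * ind (PP v = l)))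
       + f j k l * (ind (PP u = k) * ind (PP v = l))))
     = (\<Sum>k=0..CARD('n). \<Sum>l=0..CARD('n). if k = PP u then (if l = PP v then G k l else 0) else 0)"
  proof (intro sum.cong refl)
    fix k l
    have X: "(\<Sum>i\<in>UNIV. (u$i * ind (PP u = k)) * (v$i * ind (PP v = l)))
        = ind (PP u = k) * ind (PP v = l) * real (TP u v)"
      by (simp add: TP_sum[OF u v] sum_distrib_left mult_ac)
    have Y: "(\<Sum>i\<in>UNIV. ((1 - u$i) * ind (PP u = k)) * ((1 - v$i) * ind (PP v = l)))
        = ind (PP u = k) * ind (PP v = l) * real (TN u v)"
      by (simp add: TN_sum[OF u v] sum_distrib_left mult_ac)
    show "(\<Sum>j=1..J. (1 / g j k l) * (a j * (\<Sum>i\<in>UNIV. (u$i * ind (PP u = k)) * (v$i * ind (PP v = l)))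
       + b j * (\<Sum>i\<in>UNIV. ((1 - u$i) * ind (PP u = k)) * ((1 - v$i) * ind (PP v = l)))
       + f j k l * (ind (PP u = k) * ind (PP v = l))))
       = (if k = PP u then (if l = PP v then G k l else 0) else 0)"
      unfolding X Y G_def by (auto simp: ind_def)
  qed
  also have "\<dots> = (\<Sum>k=0..CARD('n). if k = PP u then G k (PP v) else 0)"
  proof (rule sum.cong[OF refl])
    fix k show "(\<Sum>l=0..CARD('n). if k = PP u then (if l = PP v then G k l else 0) else 0)
       = (if k = PP u then G k (PP v) else 0)"
      using PP_le[of v] by (cases "k = PP u") simp_all
  qed
  also have "\<dots> = G (PP u) (PP v)" using PP_le[of u] by simp
  also have "\<dots> = metric J a b f g u v"
    unfolding G_def metric_def AP_PP by (rule sum.cong) auto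
  finally show ?thesis .
qed


lemma marg_alt: "marg D i k = (\<Sum>v\<in>labels. D v * (v$i * ind (PP v = k)))"
  by (simp add: marg_def mult.assoc)

lemma expect_metric:
  fixes P Q :: "real^'n \<Rightarrow> real"
  assumes PD: "P \<in> distribs" and QD: "Q \<in> distribs"
  shows "expect2 P Q (metric J a b f g) = marginal_payoff J a b f g (marg P) (marg Q)"
proof -
  define X where "X = (\<lambda>k l (u::real^'n) (v::real^'n). \<Sum>i\<in>UNIV. (u$i * ind (PP u = k)) * (v$i * ind (PP v = l)))"
  define Y where "Y = (\<lambda>k l (u::real^'n) (v::real^'n). \<Sum>i\<in>UNIV. ((1 - u$i) * ind (PP u = k)) * ((1 - v$i) * ind (PP v = l)))"
  define Z where "Z = (\<lambda>k l (u::real^'n) (v::real^'n). ind (PP u = k) * ind (PP v = l))"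
  have d1: "dotv (p1 (marg P) k) (p1 (marg Q) l) = (\<Sum>u\<in>labels. \<Sum>v\<in>labels. P u * Q v * X k l u v)" for k l
    unfolding dotv_def p1_marg marg_alt X_def by (rule bil)
  have d0: "dotv (p0 (marg P) k) (p0 (marg Q) l) = (\<Sum>u\<in>labels. \<Sum>v\<in>labels. P u * Q v * Y k l u v)" for k l
  proof -
    have e: "p0 (marg D) k i = (\<Sum>v\<in>labels. D v * ((1 - v$i) * ind (PP v = k)))" if "D \<in> distribs" for D :: "real^'n \<Rightarrow> real" and k i
      using p0_marg[OF that] by (simp add: mult.assoc)
    show ?thesis unfolding dotv_def e[OF PD] e[OF QD] Y_def by (rule bil)
  qed
  have dr: "rk (marg P) k * rk (marg Q) l = (\<Sum>u\<in>labels. \<Sum>v\<in>labels. P u * Q v * Z k l u v)" for k l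
    unfolding rk_marg[OF PD] rk_marg[OF QD] Rk_def Z_def sum_product by (simp add: mult_ac)
  have "marginal_payoff J a b f g (marg P) (marg Q)
     = (\<Sum>k=0..CARD('n). \<Sum>l=0..CARD('n). \<Sum>j=1..J. \<Sum>u\<in>labels. \<Sum>v\<in>labels.
          P u * Q v * ((1 / g j k l) * (a j * X k l u v + b j * Y k l u v + f j k l * Z k l u v)))"
    unfolding marginal_payoff_def mult.assoc[of "f _ _ _"] dr d1 d0
    by (intro sum.cong refl) (simp add: sum_distrib_left sum.distrib algebra_simps)
  also have "\<dots> = (\<Sum>u\<in>labels. \<Sum>v\<in>labels. \<Sum>k=0..CARD('n). \<Sum>l=0..CARD('n). \<Sum>j=1..J.
          P u * Q v * ((1 / g j k l) * (a j * X k l u v + b j * Y k l u v + f j k l * Z k l u v)))"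
    by (rule swap5)
  also have "\<dots> = (\<Sum>u\<in>labels. \<Sum>v\<in>labels. P u * Q v * metric J a b f g u v)"
  proof (intro sum.cong refl)
    fix u v :: "real^'n" assume u: "u \<in> labels" and v: "v \<in> labels"
    show "(\<Sum>k=0..CARD('n). \<Sum>l=0..CARD('n). \<Sum>j=1..J.
          P u * Q v * ((1 / g j k l) * (a j * X k l u v + b j * Y k l u v + f j k l * Z k l u v)))
        = P u * Q v * metric J a b f g u v"
      unfolding pair_ident[OF u v, symmetric] X_def Y_def Z_def by (simp add: sum_distrib_left)
  qed
  finally show ?thesis by (simp add: expect2_def)
qed


lemma expect2_diff: "expect2 P Q (\<lambda>u v. h1 u v - h2 u v) = expect2 P Q h1 - expect2 P Q h2"
  by (simp add: expect2_def right_diff_distrib sum_subtractf)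

lemma theta_inner: "(\<theta>::real^'m) \<bullet> ((Psi::real^'n^'m) *v x) = (transpose Psi *v \<theta>) \<bullet> x"
  by (metis dot_lmul_matrix transpose_matrix_vector)

lemma colsum_marg:
  fixes Q :: "real^'n \<Rightarrow> real"
  shows "colsum (marg Q) $ i = (\<Sum>v\<in>labels. Q v * v$i)"
proof -
  have "colsum (marg Q) $ i = (\<Sum>k=0..CARD('n). marg Q i k)"
    by (simp add: colsum_def sum.atLeast_Suc_atMost marg0)
  also have "\<dots> = (\<Sum>v\<in>labels. Q v * v$i * (\<Sum>k=0..CARD('n). ind (PP v = k)))"
    unfolding marg_def by (subst sum.swap) (simp add: sum_distrib_left)
  also have "\<dots> = (\<Sum>v\<in>labels. Q v * v$i)" by (simp add: ind_sum_k)
  finally show ?thesis .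
qed

lemma expect_theta:
  fixes P Q :: "real^'n \<Rightarrow> real" and y :: "real^'n" and Psi :: "real^'n^'m"
  assumes PD: "P \<in> distribs" and QD: "Q \<in> distribs"
  shows "expect2 P Q (\<lambda>yh yc. \<theta> \<bullet> (Psi *v yc - Psi *v y))
     = colsum (marg Q) \<bullet> (transpose Psi *v \<theta>) - y \<bullet> (transpose Psi *v \<theta>)"
proof -
  define w where "w = transpose Psi *v \<theta>"
  have h: "\<theta> \<bullet> (Psi *v yc - Psi *v y) = w \<bullet> yc - w \<bullet> y" for yc
    by (simp add: inner_diff_right theta_inner w_def)
  have "expect2 P Q (\<lambda>yh yc. \<theta> \<bullet> (Psi *v yc - Psi *v y))
      = (\<Sum>u\<in>labels. P u) * (\<Sum>v\<in>labels. Q v * (w \<bullet> v - w \<bullet> y))"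
    unfolding expect2_def h sum_product by (simp add: mult.assoc)
  also have "\<dots> = (\<Sum>v\<in>labels. Q v * (w \<bullet> v)) - w \<bullet> y"
    using distribs_sum[OF PD] distribs_sum[OF QD]
    by (simp add: right_diff_distrib sum_subtractf sum_distrib_right[symmetric])
  also have "(\<Sum>v\<in>labels. Q v * (w \<bullet> v)) = colsum (marg Q) \<bullet> w"
    unfolding inner_vec_def colsum_marg
    by (simp add: sum_distrib_left sum_distrib_right mult_ac) (rule sum.swap)
  finally show ?thesis by (simp add: w_def inner_commute)
qed

lemma distribs_le1: assumes "D \<in> distribs" shows "D v \<le> 1"
proof (cases "v \<in> labels")
  case True
  have "D v \<le> (\<Sum>u\<in>labels. D u)"
    by (rule member_le_sum) (use True assms finite_labels distribs_ge0 in auto)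
  then show ?thesis using distribs_sum[OF assms] by simp
next
  case False then show ?thesis using assms by (simp add: distribs_def)
qed

lemma expect_bound:
  assumes "P \<in> distribs" "Q \<in> distribs"
  shows "\<bar>expect2 P Q h\<bar> \<le> (\<Sum>u\<in>labels. \<Sum>v\<in>labels. \<bar>h u v\<bar>)"
proof -
  have "\<bar>expect2 P Q h\<bar> \<le> (\<Sum>u\<in>labels. \<Sum>v\<in>labels. \<bar>P u * Q v * h u v\<bar>)"
    unfolding expect2_def by (rule order_trans[OF sum_abs sum_mono]) (rule sum_abs)
  also have "\<dots> \<le> (\<Sum>u\<in>labels. \<Sum>v\<in>labels. \<bar>h u v\<bar>)"
  proof (intro sum_mono)
    fix u v
    have "\<bar>P u * Q v\<bar> \<le> 1"
      using distribs_ge0[OF assms(1), of u] distribs_ge0[OF assms(2), of v]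
        distribs_le1[OF assms(1), of u] distribs_le1[OF assms(2), of v]
      by (simp add: abs_mult mult_le_one)
    then show "\<bar>P u * Q v * h u v\<bar> \<le> \<bar>h u v\<bar>"
      by (simp add: abs_mult mult_left_le_one_le)
  qed
  finally show ?thesis .
qed


theorem theorem2:
  fixes y :: "real^'n"
    and Psi :: "real^'n^'m"
    and J :: nat
    and a b :: "nat \<Rightarrow> real"
    and f g :: "nat \<Rightarrow> nat \<Rightarrow> nat \<Rightarrow> real"
  assumes y_lab: "y \<in> labels"
    and g_nz: "\<And>j k l. j \<in> {1..J} \<Longrightarrow> k \<le> CARD('n) \<Longrightarrow> l \<le> CARD('n) \<Longrightarrow> g j k l \<noteq> 0"
  shows
    "(SUP \<theta>\<in>(UNIV :: (real^'m) set). INF Q\<in>distribs. SUP P\<in>distribs.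
        expect2 P Q (\<lambda>yh yc. metric J a b f g yh yc - \<theta> \<bullet> (Psi *v yc - Psi *v y)))
     = (SUP \<theta>\<in>(UNIV :: (real^'m) set).
          (INF Q\<in>Delta. SUP P\<in>Delta.
             marginal_payoff J a b f g P Q - colsum Q \<bullet> (transpose Psi *v \<theta>))
          + y \<bullet> (transpose Psi *v \<theta>))"
proof (rule SUP_cong[OF refl])
  fix \<theta> :: "real^'m"
  define w where "w = transpose Psi *v \<theta>"
  define H where "H = (\<lambda>yh yc. metric J a b f g yh yc - \<theta> \<bullet> (Psi *v yc - Psi *v y))"
  define c where "c = y \<bullet> w"
  define A where "A = (\<lambda>P Q. marginal_payoff J a b f g P Q - colsum Q \<bullet> w)"
  define M where "M = (\<Sum>u\<in>labels. \<Sum>v\<in>labels. \<bar>H u v\<bar>)"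
  let ?D = "distribs :: (real^'n \<Rightarrow> real) set"
  have key: "expect2 P Q H = c + A (marg P) (marg Q)" if "P \<in> ?D" "Q \<in> ?D" for P Q
    unfolding H_def expect2_diff expect_metric[OF that] expect_theta[OF that] A_def c_def w_def
    by simp
  have bnd: "\<bar>expect2 P Q H\<bar> \<le> M" if "P \<in> ?D" "Q \<in> ?D" for P Q
    unfolding M_def by (rule expect_bound[OF that])
  define D0 where "D0 = (\<lambda>v::real^'n. if v = 0 then (1::real) else 0)"
  have D0: "D0 \<in> ?D"
  proof -
    have "(0::real^'n) \<in> labels" by (simp add: labels_def)
    then show ?thesis
      by (auto simp: distribs_def D0_def sum.delta[OF finite_labels])
  qed
  have ne: "?D \<noteq> {}" using D0 by blast
  have bddA: "bdd_above ((\<lambda>P. A (marg P) (marg Q)) ` ?D)" if "Q \<in> ?D" for Q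
  proof (rule bdd_aboveI2)
    fix P assume "P \<in> ?D"
    then show "A (marg P) (marg Q) \<le> M - c" using key[of P Q] bnd[of P Q] that by linarith
  qed
  have inner: "(SUP P\<in>?D. expect2 P Q H) = c + (SUP P\<in>?D. A (marg P) (marg Q))" if "Q \<in> ?D" for Q
  proof -
    have "(SUP P\<in>?D. expect2 P Q H) = (SUP P\<in>?D. c + A (marg P) (marg Q))"
      by (rule SUP_cong[OF refl]) (use key that in auto)
    also have "\<dots> = c + (SUP P\<in>?D. A (marg P) (marg Q))"
      by (rule Sup_add_eq[OF bddA[OF that] ne])
    finally show ?thesis .
  qed
  have bddS: "bdd_below ((\<lambda>Q. SUP P\<in>?D. A (marg P) (marg Q)) ` ?D)"
  proof (rule bdd_belowI2)
    fix Q assume Q: "Q \<in> ?D"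
    have "A (marg D0) (marg Q) \<le> (SUP P\<in>?D. A (marg P) (marg Q))"
      by (rule cSUP_upper[OF D0 bddA[OF Q]])
    moreover have "- M - c \<le> A (marg D0) (marg Q)" using key[OF D0 Q] bnd[OF D0 Q] by linarith
    ultimately show "- M - c \<le> (SUP P\<in>?D. A (marg P) (marg Q))" by linarith
  qed
  have img: "(SUP P\<in>?D. A (marg P) Q') = (SUP P\<in>Delta. A P Q')" for Q'
  proof -
    have "(\<lambda>P. A (marg P) Q') ` ?D = (\<lambda>P. A P Q') ` Delta"
      by (simp add: marg_image[symmetric] image_image)
    then show ?thesis by simp
  qed
  have img2: "(INF Q\<in>?D. (SUP P\<in>Delta. A P (marg Q))) = (INF Q\<in>Delta. SUP P\<in>Delta. A P Q)"
  proof -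
    have "(\<lambda>Q. SUP P\<in>Delta. A P (marg Q)) ` ?D = (\<lambda>Q. SUP P\<in>Delta. A P Q) ` Delta"
      by (simp add: marg_image[symmetric] image_image)
    then show ?thesis by simp
  qed
  have "(INF Q\<in>?D. SUP P\<in>?D. expect2 P Q H) = (INF Q\<in>?D. c + (SUP P\<in>?D. A (marg P) (marg Q)))"
    by (rule INF_cong[OF refl]) (rule inner)
  also have "\<dots> = c + (INF Q\<in>?D. (SUP P\<in>?D. A (marg P) (marg Q)))"
    by (rule Inf_add_eq[OF bddS ne])
  also have "\<dots> = c + (INF Q\<in>Delta. SUP P\<in>Delta. A P Q)"
    unfolding img img2 ..
  finally show "(INF Q\<in>distribs. SUP P\<in>distribs.
        expect2 P Q (\<lambda>yh yc. metric J a b f g yh yc - \<theta> \<bullet> (Psi *v yc - Psi *v y)))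
     = (INF Q\<in>Delta. SUP P\<in>Delta.
             marginal_payoff J a b f g P Q - colsum Q \<bullet> (transpose Psi *v \<theta>))
          + y \<bullet> (transpose Psi *v \<theta>)"
    unfolding H_def A_def c_def w_def by simp
qed

end
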